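(* There exist universal constants $\kappa_1,\kappa_2>0$ such that the following holds. Consider the exponentially decaying power allocation $P_\ell=P\frac{e^{2\mathcal{C}/L}-1}{1-e^{-2\mathcal{C}}}e^{-2\mathcal{C}\ell/L}$, $\ell\in[L]$, with $L\ln M=nR$, fix $\tau>0$ and set $\nu_\ell=LP_\ell/(R\tau^2)$. Then for all sufficiently large $M$ and any $\delta\in(0,\frac12)$, $$x(\tau)\ge\Big(1-\frac{M^{-\kappa_1\delta^2}}{\delta\sqrt{\log M}}\Big)\sum_{\ell=1}^L\frac{P_\ell}{P}\mathbf 1\{\nu_\ell>2+\delta\}+\frac14\sum_{\ell=1}^L\frac{P_\ell}{P}\mathbf 1\Big\{2\Big(1-\frac{\kappa_2}{\sqrt{\log M}}\Big)\le\nu_\ell\le2+\delta\Big\}.$$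
   Context: $\sigma^2,P>0$, $\textsf{snr}=P/\sigma^2$, $\mathcal{C}=\frac12\ln(1+\textsf{snr})$, rate $R$ in nats. The function $$x(\tau):=\sum_{\ell=1}^L\frac{P_\ell}{P}\,\mathbb{E}\left[\frac{\exp\{\frac{\sqrt{nP_\ell}}{\tau}(U^\ell_1+\frac{\sqrt{nP_\ell}}{\tau})\}}{\exp\{\frac{\sqrt{nP_\ell}}{\tau}(U^\ell_1+\frac{\sqrt{nP_\ell}}{\tau})\}+\sum_{j=2}^M\exp\{\frac{\sqrt{nP_\ell}}{\tau}U^\ell_j\}}\right]$$ with $\{U^\ell_j\}$ i.i.d. $\mathcal{N}(0,1)$. *)

theory Defs
  imports "HOL-Probability.Probability"
begin

definition std_gauss :: "real measure" where
  "std_gauss = density lborel std_normal_density"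

definition capacity :: "real \<Rightarrow> real \<Rightarrow> real" where
  "capacity P sigma2 = (1/2) * ln (1 + P / sigma2)"

definition exp_power_alloc :: "real \<Rightarrow> real \<Rightarrow> nat \<Rightarrow> nat \<Rightarrow> real" where
  "exp_power_alloc P C L l =
     P * (exp (2 * C / real L) - 1) / (1 - exp (- 2 * C)) * exp (- 2 * C * real l / real L)"

definition section_term :: "nat \<Rightarrow> real \<Rightarrow> real" where
  "section_term M c =
     (\<integral>u. exp (c * (u 1 + c)) / (exp (c * (u 1 + c)) + (\<Sum>j\<in>{2..M}. exp (c * u j)))
        \<partial>(PiM {1..M} (\<lambda>_. std_gauss)))"

definition x_tau :: "nat \<Rightarrow> nat \<Rightarrow> nat \<Rightarrow> (nat \<Rightarrow> real) \<Rightarrow> real \<Rightarrow> real \<Rightarrow> real" where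
  "x_tau n M L Pl P \<tau> =
     (\<Sum>l=1..L. Pl l / P * section_term M (sqrt (real n * Pl l) / \<tau>))"

end

theory Submission
  imports Defs "HOL-Analysis.Analysis"
begin


lemma phi_le: "std_normal_density u \<le> std_normal_density v * exp (- v * (u - v))"
proof -
  have "- u\<^sup>2 / 2 \<le> - v\<^sup>2 / 2 + (- v * (u - v))"
    using zero_le_power2[of "u - v"] by (simp add: power2_eq_square algebra_simps)
  hence "exp (- u\<^sup>2 / 2) \<le> exp (- v\<^sup>2 / 2) * exp (- v * (u - v))"
    by (simp add: exp_add[symmetric])
  thus ?thesis unfolding std_normal_density_def
    by (simp add: mult.assoc divide_right_mono)
qed

lemma exp_tail:
  assumes a: "(a::real) > 0"
  shows "has_bochner_integral lborel (\<lambda>x. indicator {c..} x * exp (-a*x)) (exp (-a*c)/a)"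
proof -
  have "((\<lambda>x. exp (-a*x)) has_integral exp (-a*c)/a) {c..}"
    using has_integral_exp_minus_to_infinity[OF a] .
  moreover have "(\<lambda>x. indicator {c..} x * exp (-a*x)) = (\<lambda>x. if x \<in> {c..} then exp (-a*x) else 0)"
    by (auto simp: indicator_def)
  ultimately have "((\<lambda>x. indicator {c..} x * exp (-a*x)) has_integral exp (-a*c)/a) UNIV"
    using has_integral_restrict_UNIV[of "{c..}" "\<lambda>x. exp (-a*x)"] by simp
  hence "integral\<^sup>N lborel (\<lambda>x. indicator {c..} x * exp (-a*x)) = exp (-a*c)/a"
    by (intro nn_integral_has_integral_lborel) auto
  thus ?thesis
    by (intro has_bochner_integral_nn_integral) (use a in \<open>auto intro: divide_nonneg_pos\<close>)
qed

lemma reflect_lborel: "(\<integral>x. f x \<partial>lborel) = (\<integral>x. f (- x) \<partial>lborel)" for f :: "real \<Rightarrow> real"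
  using lborel_integral_real_affine[of "-1" f 0] by simp

lemma mgf:
  "has_bochner_integral lborel (\<lambda>x. std_normal_density x * exp (c*x)) (exp (c\<^sup>2/2))"
proof -
  have eq: "std_normal_density x * exp (c*x) = exp (c\<^sup>2/2) * normal_density c 1 x" for x
  proof -
    have "- x\<^sup>2 / 2 + c*x = c\<^sup>2/2 + (-(x - c)\<^sup>2 / 2)"
      by (simp add: power2_eq_square field_simps)
    thus ?thesis unfolding normal_density_def
      by (simp add: mult_exp_exp)
  qed
  have "has_bochner_integral lborel (\<lambda>x. exp (c\<^sup>2/2) * normal_density c 1 x) (exp (c\<^sup>2/2) * 1)"
    by (intro has_bochner_integral_mult_right) (simp add: has_bochner_integral_iff)
  thus ?thesis by (simp add: eq)
qed

abbreviation "phi \<equiv> std_normal_density"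

lemma phi_pos: "phi x > 0" by (simp add: normal_density_pos)
lemma phi_sym: "phi (-x) = phi x" by (simp add: std_normal_density_def)
lemma phi_le0: "phi x \<le> 1 / sqrt (2*pi)"
  unfolding std_normal_density_def by (simp add: divide_right_mono)

lemma phi_mono: "\<bar>x\<bar> \<le> \<bar>r\<bar> \<Longrightarrow> phi r \<le> phi x"
proof -
  assume "\<bar>x\<bar> \<le> \<bar>r\<bar>"
  hence "x\<^sup>2 \<le> r\<^sup>2" by (metis abs_le_square_iff)
  thus ?thesis unfolding std_normal_density_def by (simp add: divide_right_mono)
qed

lemma int_phi_ind: "A \<in> sets borel \<Longrightarrow> integrable lborel (\<lambda>x. indicator A x * phi x)"
  using integrable_mult_indicator[of A lborel phi] by simp

lemma int_phi: "integrable lborel phi" by simp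

lemma mills:
  assumes s: "s > 0"
  shows "(\<integral>x. indicator {s..} x * phi x \<partial>lborel) \<le> phi s / s"
proof -
  have h: "has_bochner_integral lborel (\<lambda>x. indicator {s..} x * exp (-s*x)) (exp (-s* s)/s)"
    using exp_tail[OF s] .
  have "(\<integral>x. indicator {s..} x * phi x \<partial>lborel)
      \<le> (\<integral>x. (phi s * exp (s* s)) * (indicator {s..} x * exp (-s*x)) \<partial>lborel)"
  proof (rule integral_mono)
    show "integrable lborel (\<lambda>x. indicator {s..} x * phi x)" by (rule int_phi_ind) auto
    show "integrable lborel (\<lambda>x. (phi s * exp (s* s)) * (indicator {s..} x * exp (-s*x)))"
      using h by (intro integrable_mult_right) (auto simp: has_bochner_integral_iff)
    fix x
    have "phi x \<le> phi s * exp (- s * (x - s))" by (rule phi_le)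
    also have "\<dots> = phi s * exp (s* s) * exp (-s*x)"
      by (simp add: mult_exp_exp algebra_simps)
    finally show "indicator {s..} x * phi x \<le> (phi s * exp (s* s)) * (indicator {s..} x * exp (-s*x))"
      by (auto simp: indicator_def)
  qed
  also have "\<dots> = (phi s * exp (s* s)) * (exp (-s* s)/s)"
    using h by (simp add: has_bochner_integral_iff)
  also have "\<dots> = phi s / s" by (simp add: mult_exp_exp)
  finally show ?thesis .
qed

lemma second_term:
  assumes cs: "c > s"
  shows "(\<integral>x. indicator {-s<..} x * phi x * exp (-c*(x+s)) \<partial>lborel) \<le> phi s / (c - s)"
proof -
  have a: "c - s > 0" using cs by simp
  have h: "has_bochner_integral lborel (\<lambda>x. indicator {-s..} x * exp (-(c-s)*x)) (exp (-(c-s)*(-s))/(c-s))"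
    using exp_tail[OF a] .
  have "(\<integral>x. indicator {-s<..} x * phi x * exp (-c*(x+s)) \<partial>lborel)
      \<le> (\<integral>x. (phi s * exp (-(c-s)* s)) * (indicator {-s..} x * exp (-(c-s)*x)) \<partial>lborel)"
  proof (rule integral_mono)
    show "integrable lborel (\<lambda>x. indicator {-s<..} x * phi x * exp (-c*(x+s)))"
    proof (rule Bochner_Integration.integrable_bound)
      show "integrable lborel (\<lambda>x. (phi s * exp (-(c-s)* s)) * (indicator {-s..} x * exp (-(c-s)*x)))"
        using h by (intro integrable_mult_right) (auto simp: has_bochner_integral_iff)
      show "AE x in lborel. norm (indicator {-s<..} x * phi x * exp (-c*(x+s)))
          \<le> norm ((phi s * exp (-(c-s)* s)) * (indicator {-s..} x * exp (-(c-s)*x)))"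
      proof (rule AE_I2)
        fix x
        have "phi x \<le> phi (-s) * exp (- (-s) * (x - (-s)))" by (rule phi_le)
        hence "phi x * exp (-c*(x+s)) \<le> phi s * exp (s*(x+s)) * exp (-c*(x+s))"
          by (simp add: phi_sym)
        also have "\<dots> = phi s * exp (-(c-s)* s) * exp (-(c-s)*x)"
          by (simp add: mult_exp_exp algebra_simps)
        finally show "norm (indicator {-s<..} x * phi x * exp (-c*(x+s)))
          \<le> norm ((phi s * exp (-(c-s)* s)) * (indicator {-s..} x * exp (-(c-s)*x)))"
          using phi_pos[of x] phi_pos[of s] by (auto simp: indicator_def abs_mult)
      qed
    qed simp
    show "integrable lborel (\<lambda>x. (phi s * exp (-(c-s)* s)) * (indicator {-s..} x * exp (-(c-s)*x)))"
      using h by (intro integrable_mult_right) (auto simp: has_bochner_integral_iff)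
    fix x
    have "phi x \<le> phi (-s) * exp (- (-s) * (x - (-s)))" by (rule phi_le)
    hence "phi x * exp (-c*(x+s)) \<le> phi s * exp (s*(x+s)) * exp (-c*(x+s))"
      by (simp add: phi_sym)
    also have "\<dots> = phi s * exp (-(c-s)* s) * exp (-(c-s)*x)"
      by (simp add: mult_exp_exp algebra_simps)
    finally show "indicator {-s<..} x * phi x * exp (-c*(x+s))
        \<le> (phi s * exp (-(c-s)* s)) * (indicator {-s..} x * exp (-(c-s)*x))"
      by (auto simp: indicator_def)
  qed
  also have "\<dots> = (phi s * exp (-(c-s)* s)) * (exp (-(c-s)*(-s))/(c-s))"
    using h by (simp add: has_bochner_integral_iff)
  also have "\<dots> = phi s / (c - s)" by (simp add: mult_exp_exp)
  finally show ?thesis .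
qed

lemma half_bounds:
  "(\<integral>x. indicator {0<..} x * phi x \<partial>lborel) \<le> 1/2"
  "(\<integral>x. indicator {0..} x * phi x \<partial>lborel) \<ge> 1/2"
proof -
  define A where "A = (\<integral>x. indicator {..<0} x * phi x \<partial>lborel)"
  define B where "B = (\<integral>x. indicator {0<..} x * phi x \<partial>lborel)"
  define B0 where "B0 = (\<integral>x. indicator {0..} x * phi x \<partial>lborel)"
  have iA: "integrable lborel (\<lambda>x. indicator {..<0} x * phi x)" by (rule int_phi_ind) auto
  have iB: "integrable lborel (\<lambda>x. indicator {0<..} x * phi x)" by (rule int_phi_ind) auto
  have iB0: "integrable lborel (\<lambda>x. indicator {0..} x * phi x)" by (rule int_phi_ind) auto
  have "A = (\<integral>x. indicator {..<0} (-x) * phi (-x) \<partial>lborel)"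
    unfolding A_def by (rule reflect_lborel)
  also have "\<dots> = B" unfolding B_def
    by (intro Bochner_Integration.integral_cong) (auto simp: indicator_def phi_sym)
  finally have AB: "A = B" .
  have "A + B0 = (\<integral>x. indicator {..<0} x * phi x + indicator {0..} x * phi x \<partial>lborel)"
    unfolding A_def B0_def using iA iB0 by simp
  also have "\<dots> = (\<integral>x. phi x \<partial>lborel)"
    by (intro Bochner_Integration.integral_cong) (auto simp: indicator_def)
  finally have AB0: "A + B0 = 1" by simp
  have "A + B = (\<integral>x. indicator {..<0} x * phi x + indicator {0<..} x * phi x \<partial>lborel)"
    unfolding A_def B_def using iA iB by simp
  also have "\<dots> \<le> (\<integral>x. phi x \<partial>lborel)"
    using iA iB phi_pos by (intro integral_mono) (auto simp: indicator_def less_imp_le)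
  finally have AB1: "A + B \<le> 1" by simp
  have "B \<le> B0" unfolding B_def B0_def using iB iB0
    by (intro integral_mono) (auto simp: indicator_def)
  show "B \<le> 1/2" using AB AB1 by simp
  show "B0 \<ge> 1/2" using AB AB0 \<open>B \<le> B0\<close> by simp
qed

lemma int_ind_Ioo: "a \<le> b \<Longrightarrow> integrable lborel (indicator {a<..<b} :: real \<Rightarrow> real)"
  by (simp add: integrable_indicator_iff)
lemma int_ind_Icc: "a \<le> b \<Longrightarrow> integrable lborel (indicator {a..b} :: real \<Rightarrow> real)"
  by (simp add: integrable_indicator_iff)

lemma interval_lower:
  assumes r: "r > 0"
  shows "(\<integral>x. indicator {0<..<r} x * phi x \<partial>lborel) \<ge> r * phi r"
proof -
  have "(\<integral>x. phi r * indicator {0<..<r} x \<partial>lborel) \<le> (\<integral>x. indicator {0<..<r} x * phi x \<partial>lborel)"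
  proof (rule integral_mono)
    show "integrable lborel (\<lambda>x. phi r * indicator {0<..<r} x)"
      using int_ind_Ioo[of 0 r] r by (intro integrable_mult_right) auto
    show "integrable lborel (\<lambda>x. indicator {0<..<r} x * phi x)" by (rule int_phi_ind) auto
    fix x show "phi r * indicator {0<..<r} x \<le> indicator {0<..<r} x * phi x"
      using phi_mono[of x r] by (auto simp: indicator_def)
  qed
  thus ?thesis using r by (simp add: mult.commute)
qed

lemma interval_upper:
  assumes t: "t \<ge> 0"
  shows "(\<integral>x. indicator {0..t} x * phi x \<partial>lborel) \<le> t / sqrt (2*pi)"
proof -
  have "(\<integral>x. indicator {0..t} x * phi x \<partial>lborel) \<le> (\<integral>x. (1 / sqrt (2*pi)) * indicator {0..t} x \<partial>lborel)"
  proof (rule integral_mono)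
    show "integrable lborel (\<lambda>x. (1 / sqrt (2*pi)) * indicator {0..t} x)"
      using int_ind_Icc[of 0 t] t by (intro integrable_mult_right) auto
    show "integrable lborel (\<lambda>x. indicator {0..t} x * phi x)" by (rule int_phi_ind) auto
    fix x show "indicator {0..t} x * phi x \<le> (1 / sqrt (2*pi)) * indicator {0..t} x"
      using phi_le0[of x] by (auto simp: indicator_def)
  qed
  thus ?thesis using t by simp
qed

lemma tail_half:
  assumes s: "s > 0"
  shows "(\<integral>x. indicator {s..} x * phi x \<partial>lborel) \<le> 1/2"
proof -
  have "(\<integral>x. indicator {s..} x * phi x \<partial>lborel) \<le> (\<integral>x. indicator {0<..} x * phi x \<partial>lborel)"
    using s phi_pos by (intro integral_mono int_phi_ind) (auto simp: indicator_def less_imp_le)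
  thus ?thesis using half_bounds(1) by linarith
qed

lemma tail_lin:
  assumes r: "0 < r" "r \<le> s"
  shows "(\<integral>x. indicator {s..} x * phi x \<partial>lborel) \<le> 1/2 - r * phi r"
proof -
  have "(\<integral>x. indicator {s..} x * phi x \<partial>lborel)
     \<le> (\<integral>x. indicator {0<..} x * phi x - indicator {0<..<r} x * phi x \<partial>lborel)"
    using r phi_pos by (intro integral_mono int_phi_ind Bochner_Integration.integrable_diff)
      (auto simp: indicator_def less_imp_le)
  also have "\<dots> = (\<integral>x. indicator {0<..} x * phi x \<partial>lborel) - (\<integral>x. indicator {0<..<r} x * phi x \<partial>lborel)"
    by (intro Bochner_Integration.integral_diff int_phi_ind) auto
  finally show ?thesis using half_bounds(1) interval_lower[OF r(1)] by linarith
qed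

lemma tail_lower:
  assumes t: "t \<ge> 0"
  shows "(\<integral>x. indicator {t<..} x * phi x \<partial>lborel) \<ge> 1/2 - t / sqrt (2*pi)"
proof -
  have "(\<integral>x. indicator {0..} x * phi x - indicator {0..t} x * phi x \<partial>lborel)
     \<le> (\<integral>x. indicator {t<..} x * phi x \<partial>lborel)"
    using t phi_pos by (intro integral_mono int_phi_ind Bochner_Integration.integrable_diff)
      (auto simp: indicator_def less_imp_le)
  moreover have "(\<integral>x. indicator {0..} x * phi x - indicator {0..t} x * phi x \<partial>lborel)
     = (\<integral>x. indicator {0..} x * phi x \<partial>lborel) - (\<integral>x. indicator {0..t} x * phi x \<partial>lborel)"
    by (intro Bochner_Integration.integral_diff int_phi_ind) auto
  ultimately show ?thesis using half_bounds(2) interval_upper[OF t] by linarith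
qed




lemma gauss_prob: "prob_space std_gauss"
  unfolding std_gauss_def by (rule prob_space_normal_density) simp

lemma sets_gauss[measurable_cong, simp]: "sets std_gauss = sets borel"
  unfolding std_gauss_def by simp

lemma space_gauss[simp]: "space std_gauss = UNIV"
  unfolding std_gauss_def by simp

lemma gauss_integral:
  assumes [measurable]: "f \<in> borel_measurable borel"
  shows "integral\<^sup>L std_gauss f = (\<integral>x. phi x * f x \<partial>lborel)"
  unfolding std_gauss_def by (subst integral_density) auto

lemma gauss_integrable:
  assumes [measurable]: "f \<in> borel_measurable borel"
  shows "integrable std_gauss f \<longleftrightarrow> integrable lborel (\<lambda>x. phi x * f x)"
  unfolding std_gauss_def by (subst integrable_density) auto

lemma gp: "product_prob_space (\<lambda>_::nat. std_gauss)"
  unfolding product_prob_space_def product_prob_space_axioms_def product_sigma_finite_def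
  using gauss_prob by (auto simp: prob_space_imp_sigma_finite)

lemma two_coord:
  fixes A B :: "real \<Rightarrow> real"
  fixes I :: "nat set"
  assumes I: "finite I" "i \<in> I" "j \<in> I" "i \<noteq> j"
    and A: "integrable std_gauss A" and B: "integrable std_gauss B"
  shows "integrable (PiM I (\<lambda>_. std_gauss)) (\<lambda>x. A (x i) * B (x j))"
    "(\<integral>x. A (x i) * B (x j) \<partial>PiM I (\<lambda>_. std_gauss)) = integral\<^sup>L std_gauss A * integral\<^sup>L std_gauss B"
proof -
  interpret GP: product_prob_space "\<lambda>_::nat. std_gauss" by (rule gp)
  interpret G: prob_space std_gauss by (rule gauss_prob)
  define f where "f k = (if k = i then A else if k = j then B else (\<lambda>_. 1))" for k
  have fi: "integrable std_gauss (f k)" for k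
    using A B by (auto simp: f_def)
  have pe: "(\<Prod>k\<in>I. g k) = g i * g j" if "\<And>k. k \<in> I \<Longrightarrow> k \<noteq> i \<Longrightarrow> k \<noteq> j \<Longrightarrow> g k = 1" for g :: "nat \<Rightarrow> real"
  proof -
    have "(\<Prod>k\<in>I. g k) = g i * (\<Prod>k\<in>I - {i}. g k)" using I by (simp add: prod.remove)
    also have "(\<Prod>k\<in>I - {i}. g k) = g j * (\<Prod>k\<in>I - {i} - {j}. g k)"
      using I by (intro prod.remove) auto
    also have "(\<Prod>k\<in>I - {i} - {j}. g k) = 1" using that by (intro prod.neutral) auto
    finally show ?thesis by simp
  qed
  have eq: "(\<Prod>k\<in>I. f k (x k)) = A (x i) * B (x j)" for x
    using I prob_space.prob_space[OF gauss_prob] by (subst pe) (auto simp: f_def)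
  have eq2: "(\<Prod>k\<in>I. integral\<^sup>L std_gauss (f k)) = integral\<^sup>L std_gauss A * integral\<^sup>L std_gauss B"
    using I prob_space.prob_space[OF gauss_prob] by (subst pe) (auto simp: f_def)
  show "integrable (PiM I (\<lambda>_. std_gauss)) (\<lambda>x. A (x i) * B (x j))"
    using GP.product_integrable_prod[of I f] I fi by (simp add: eq)
  show "(\<integral>x. A (x i) * B (x j) \<partial>PiM I (\<lambda>_. std_gauss)) = integral\<^sup>L std_gauss A * integral\<^sup>L std_gauss B"
    using GP.product_integral_prod[of I f] I fi by (simp add: eq eq2)
qed

lemma ratio_bound:
  fixes a S v :: real
  assumes a: "a > 0" and S: "S \<ge> 0" and v: "0 \<le> v" "v \<le> 1"
  shows "v * (1 - S / a) \<le> a / (a + S)"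
proof (cases "1 - S / a \<le> 0")
  case True
  hence "v * (1 - S / a) \<le> 0" using v by (simp add: mult_nonneg_nonpos)
  also have "0 \<le> a / (a + S)" using a S by simp
  finally show ?thesis .
next
  case False
  hence "v * (1 - S / a) \<le> 1 - S / a" using v by (simp add: mult_left_le_one_le)
  also have "1 - S / a \<le> a / (a + S)"
  proof -
    have "(1 - S / a) * (a + S) = a - S * S / a" using a by (simp add: field_simps)
    also have "\<dots> \<le> a" using a S by simp
    finally show ?thesis using a S by (simp add: pos_le_divide_eq)
  qed
  finally show ?thesis .
qed

lemma section_lower:
  fixes M :: nat and c :: real and w :: "real \<Rightarrow> real"
  assumes M: "M \<ge> 2" and w[measurable]: "w \<in> borel_measurable borel"
    and w0: "\<And>x. 0 \<le> w x" and w1: "\<And>x. w x \<le> 1"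
  shows "section_term M c \<ge>
    (\<integral>x. phi x * w x \<partial>lborel) - (real M - 1) * exp (-(c\<^sup>2)/2) * (\<integral>x. phi x * w x * exp (-c*x) \<partial>lborel)"
proof -
  interpret GP: product_prob_space "\<lambda>_::nat. std_gauss" by (rule gp)
  interpret G: prob_space std_gauss by (rule gauss_prob)
  interpret PS: prob_space "PiM {1..M} (\<lambda>_. std_gauss)"
    by (rule prob_space_PiM) (rule gauss_prob)
  define PM where "PM = PiM {1..M} (\<lambda>_::nat. std_gauss)"
  define F where "F u = exp (c * (u 1 + c)) / (exp (c * (u 1 + c)) + (\<Sum>j\<in>{2..M}. exp (c * u j)))" for u :: "nat \<Rightarrow> real"
  define W where "W x = w x * exp (-c*(x+c))" for x
  define g where "g u = w (u 1) * 1 - (\<Sum>j\<in>{2..M}. W (u 1) * exp (c * u j))" for u :: "nat \<Rightarrow> real"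
  have Wm[measurable]: "W \<in> borel_measurable borel" unfolding W_def by measurable
  have mgf_int: "integrable lborel (\<lambda>x. phi x * exp (c'*x))" for c'
    using mgf[of c'] by (simp add: has_bochner_integral_iff)
  have iW: "integrable std_gauss W"
  proof (subst gauss_integrable[OF Wm], rule Bochner_Integration.integrable_bound)
    show "integrable lborel (\<lambda>x. exp (-c*c) * (phi x * exp ((-c)*x)))"
      using mgf_int by (intro integrable_mult_right)
    show "AE x in lborel. norm (phi x * W x) \<le> norm (exp (-c*c) * (phi x * exp ((-c)*x)))"
    proof (rule AE_I2)
      fix x
      have "norm (phi x * W x) = phi x * w x * exp (-c*(x+c))"
        unfolding W_def using phi_pos[of x] w0[of x] by (simp add: abs_mult)
      also have "\<dots> \<le> phi x * 1 * exp (-c*(x+c))"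
        using phi_pos[of x] w1[of x] by (intro mult_right_mono mult_left_mono) auto
      also have "\<dots> = norm (exp (-c*c) * (phi x * exp ((-c)*x)))"
        using phi_pos[of x] by (simp add: mult_exp_exp algebra_simps)
      finally show "norm (phi x * W x) \<le> norm (exp (-c*c) * (phi x * exp ((-c)*x)))" .
    qed
  qed simp
  have iE: "integrable std_gauss (\<lambda>x. exp (c*x))"
    by (subst gauss_integrable) (auto intro: mgf_int)
  have iw: "integrable std_gauss w"
    by (rule GP.M.integrable_const_bound[where B=1]) (auto simp: w0 w1 abs_le_iff intro: order_trans[OF _ w1])
  have i1: "integrable std_gauss (\<lambda>_. 1::real)" by simp
  have I1: "1 \<in> {1..M}" "2 \<in> {1..M}" using M by auto
  have intw: "integrable PM (\<lambda>x. w (x 1) * 1)" "(\<integral>x. w (x 1) * 1 \<partial>PM) = integral\<^sup>L std_gauss w"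
    using two_coord[OF _ I1 _ iw i1] unfolding PM_def using prob_space.prob_space[OF gauss_prob] by auto
  have intj: "integrable PM (\<lambda>x. W (x 1) * exp (c * x j))"
     "(\<integral>x. W (x 1) * exp (c * x j) \<partial>PM) = integral\<^sup>L std_gauss W * (\<integral>x. exp (c*x) \<partial>std_gauss)"
    if j: "j \<in> {2..M}" for j
    using two_coord[OF _ I1(1) _ _ iW iE, of j] j unfolding PM_def by auto
  have ig: "integrable PM g"
    unfolding g_def using intw intj by (intro Bochner_Integration.integrable_diff integrable_sum) auto
  have intg: "integral\<^sup>L PM g = integral\<^sup>L std_gauss w - (real M - 1) * (integral\<^sup>L std_gauss W * (\<integral>x. exp (c*x) \<partial>std_gauss))"
  proof -
    have "integral\<^sup>L PM g = (\<integral>x. w (x 1) * 1 \<partial>PM) - (\<Sum>j\<in>{2..M}. (\<integral>x. W (x 1) * exp (c * x j) \<partial>PM))"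
    proof -
      have "integral\<^sup>L PM g = (\<integral>x. w (x 1) * 1 \<partial>PM) - (\<integral>x. (\<Sum>j\<in>{2..M}. W (x 1) * exp (c * x j)) \<partial>PM)"
        unfolding g_def using intw(1) intj(1) by (intro Bochner_Integration.integral_diff integrable_sum) auto
      also have "(\<integral>x. (\<Sum>j\<in>{2..M}. W (x 1) * exp (c * x j)) \<partial>PM) = (\<Sum>j\<in>{2..M}. (\<integral>x. W (x 1) * exp (c * x j) \<partial>PM))"
        using intj(1) by (intro Bochner_Integration.integral_sum) auto
      finally show ?thesis .
    qed
    also have "\<dots> = integral\<^sup>L std_gauss w - (\<Sum>j\<in>{2..M}. integral\<^sup>L std_gauss W * (\<integral>x. exp (c*x) \<partial>std_gauss))"
      using intw(2) intj(2) by (intro arg_cong2[where f="(-)"] sum.cong) auto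
    also have "\<dots> = integral\<^sup>L std_gauss w - (real M - 1) * (integral\<^sup>L std_gauss W * (\<integral>x. exp (c*x) \<partial>std_gauss))"
      using M by (simp add: of_nat_diff)
    finally show ?thesis .
  qed
  have Fm: "F \<in> borel_measurable PM"
    unfolding F_def PM_def using I1 by measurable
  have iF: "integrable PM F"
  proof (rule PS.integrable_const_bound[where B=1, folded PM_def])
    show "AE x in PM. norm (F x) \<le> 1"
    proof (rule AE_I2)
      fix u :: "nat \<Rightarrow> real"
      have S: "0 \<le> (\<Sum>j\<in>{2..M}. exp (c * u j))" by (intro sum_nonneg) auto
      have p: "0 < exp (c * (u 1 + c))" by simp
      have "exp (c * (u 1 + c)) / (exp (c * (u 1 + c)) + (\<Sum>j\<in>{2..M}. exp (c * u j))) \<le> 1"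
        using add_pos_nonneg[OF p S] S by (subst divide_le_eq_1) auto
      moreover have "0 \<le> exp (c * (u 1 + c)) / (exp (c * (u 1 + c)) + (\<Sum>j\<in>{2..M}. exp (c * u j)))"
        using S p by (intro divide_nonneg_nonneg) auto
      ultimately show "norm (F u) \<le> 1" unfolding F_def real_norm_def by linarith
    qed
  qed (rule Fm)
  have Fg: "g u \<le> F u" for u
  proof -
    define a where "a = exp (c * (u 1 + c))"
    define S where "S = (\<Sum>j\<in>{2..M}. exp (c * u j))"
    have a: "a > 0" unfolding a_def by simp
    have S: "S \<ge> 0" unfolding S_def by (intro sum_nonneg) auto
    have "g u = w (u 1) - W (u 1) * S" unfolding g_def S_def by (simp add: sum_distrib_left)
    also have "W (u 1) = w (u 1) / a" unfolding W_def a_def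
      by (simp add: exp_minus[symmetric] divide_inverse algebra_simps)
    also have "w (u 1) - w (u 1) / a * S = w (u 1) * (1 - S / a)" by (simp add: algebra_simps)
    also have "\<dots> \<le> a / (a + S)" by (rule ratio_bound[OF a S w0 w1])
    also have "\<dots> = F u" unfolding F_def a_def S_def ..
    finally show ?thesis .
  qed
  have "integral\<^sup>L PM g \<le> integral\<^sup>L PM F"
    using ig iF Fg by (intro integral_mono) auto
  moreover have "section_term M c = integral\<^sup>L PM F"
    unfolding section_term_def PM_def F_def ..
  moreover have "integral\<^sup>L std_gauss w = (\<integral>x. phi x * w x \<partial>lborel)"
    by (rule gauss_integral) simp
  moreover have "integral\<^sup>L std_gauss W = exp (-c*c) * (\<integral>x. phi x * w x * exp (-c*x) \<partial>lborel)"
  proof -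
    have "integral\<^sup>L std_gauss W = (\<integral>x. phi x * W x \<partial>lborel)" by (rule gauss_integral) simp
    also have "\<dots> = (\<integral>x. exp (-c*c) * (phi x * w x * exp (-c*x)) \<partial>lborel)"
      unfolding W_def by (intro Bochner_Integration.integral_cong) (auto simp: mult_exp_exp algebra_simps)
    finally show ?thesis by simp
  qed
  moreover have "(\<integral>x. exp (c*x) \<partial>std_gauss) = exp (c\<^sup>2/2)"
    using mgf[of c] by (subst gauss_integral) (auto simp: has_bochner_integral_iff)
  moreover have "(real M - 1) * (exp (-c*c) * (\<integral>x. phi x * w x * exp (-c*x) \<partial>lborel) * exp (c\<^sup>2/2))
     = (real M - 1) * exp (-(c\<^sup>2)/2) * (\<integral>x. phi x * w x * exp (-c*x) \<partial>lborel)"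
  proof -
    have k: "exp (-c*c) * exp (c\<^sup>2/2) = exp (-(c\<^sup>2)/2)"
      by (simp add: mult_exp_exp power2_eq_square)
    show ?thesis by (simp only: k[symmetric] ac_simps)
  qed
  ultimately show ?thesis using intg by (simp only:)
qed

lemma secA_core:
  assumes M: "M \<ge> 2" and cs: "c > s" and K: "exp (-c * s) = (real M - 1) * exp (-(c\<^sup>2)/2)"
  shows "section_term M c \<ge> 1 - (\<integral>x. indicator {s..} x * phi x \<partial>lborel) - phi s / (c - s)"
proof -
  have L: "section_term M c \<ge>
    (\<integral>x. phi x * indicator {-s<..} x \<partial>lborel) - (real M - 1) * exp (-(c\<^sup>2)/2) * (\<integral>x. phi x * indicator {-s<..} x * exp (-c*x) \<partial>lborel)"
    by (rule section_lower[OF M]) (auto simp: indicator_def)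
  have "(\<integral>x. phi x * indicator {-s<..} x \<partial>lborel) = (\<integral>x. phi (-x) * indicator {-s<..} (-x) \<partial>lborel)"
    by (rule reflect_lborel)
  also have "\<dots> = (\<integral>x. phi x - indicator {s..} x * phi x \<partial>lborel)"
    by (intro Bochner_Integration.integral_cong) (auto simp: indicator_def phi_sym)
  also have "\<dots> = 1 - (\<integral>x. indicator {s..} x * phi x \<partial>lborel)"
    by (subst Bochner_Integration.integral_diff) (auto intro: int_phi_ind)
  finally have e1: "(\<integral>x. phi x * indicator {-s<..} x \<partial>lborel) = 1 - (\<integral>x. indicator {s..} x * phi x \<partial>lborel)" .
  have "(real M - 1) * exp (-(c\<^sup>2)/2) * (\<integral>x. phi x * indicator {-s<..} x * exp (-c*x) \<partial>lborel)
      = (\<integral>x. exp (-c * s) * (phi x * indicator {-s<..} x * exp (-c*x)) \<partial>lborel)"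
    unfolding K[symmetric] by simp
  also have "\<dots> = (\<integral>x. indicator {-s<..} x * phi x * exp (-c*(x+s)) \<partial>lborel)"
    by (intro Bochner_Integration.integral_cong) (auto simp: mult_exp_exp algebra_simps)
  also have "\<dots> \<le> phi s / (c - s)" by (rule second_term[OF cs])
  finally show ?thesis using L e1 by linarith
qed

lemma secB_core:
  assumes M: "M \<ge> 2" and c: "c \<ge> 0" and t: "t \<ge> 0" and ts: "t + s \<ge> 0"
    and K: "exp (-c * s) = (real M - 1) * exp (-(c\<^sup>2)/2)"
  shows "section_term M c \<ge> (1 - exp (-c*(t+s))) * (1/2 - t / sqrt (2*pi))"
proof -
  have L: "section_term M c \<ge>
    (\<integral>x. phi x * indicator {t<..} x \<partial>lborel) - (real M - 1) * exp (-(c\<^sup>2)/2) * (\<integral>x. phi x * indicator {t<..} x * exp (-c*x) \<partial>lborel)"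
    by (rule section_lower[OF M]) (auto simp: indicator_def)
  have "(real M - 1) * exp (-(c\<^sup>2)/2) * (\<integral>x. phi x * indicator {t<..} x * exp (-c*x) \<partial>lborel)
      = (\<integral>x. exp (-c * s) * (phi x * indicator {t<..} x * exp (-c*x)) \<partial>lborel)"
    unfolding K[symmetric] by simp
  also have "\<dots> \<le> (\<integral>x. exp (-c*(t+s)) * (indicator {t<..} x * phi x) \<partial>lborel)"
  proof (rule integral_mono)
    show "integrable lborel (\<lambda>x. exp (-c*(t+s)) * (indicator {t<..} x * phi x))"
      by (intro integrable_mult_right int_phi_ind) auto
    show "integrable lborel (\<lambda>x. exp (-c * s) * (phi x * indicator {t<..} x * exp (-c*x)))"
    proof (intro integrable_mult_right, rule Bochner_Integration.integrable_bound)
      show "integrable lborel (\<lambda>x. exp (-c*t) * (indicator {t<..} x * phi x))"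
        by (intro integrable_mult_right int_phi_ind) auto
      show "AE x in lborel. norm (phi x * indicator {t<..} x * exp (-c*x)) \<le> norm (exp (-c*t) * (indicator {t<..} x * phi x))"
      proof (rule AE_I2)
        fix x
        have "x > t \<Longrightarrow> exp (-c*x) \<le> exp (-c*t)" using c by (simp add: mult_left_mono)
        thus "norm (phi x * indicator {t<..} x * exp (-c*x)) \<le> norm (exp (-c*t) * (indicator {t<..} x * phi x))"
          using phi_pos[of x] by (auto simp: indicator_def abs_mult mult_left_mono)
      qed
    qed simp
    fix x
    have "x > t \<Longrightarrow> exp (-c * s) * exp (-c*x) \<le> exp (-c*(t+s))"
      using c by (simp add: mult_exp_exp algebra_simps mult_left_mono)
    thus "exp (-c * s) * (phi x * indicator {t<..} x * exp (-c*x)) \<le> exp (-c*(t+s)) * (indicator {t<..} x * phi x)"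
      using phi_pos[of x] by (auto simp: indicator_def mult_right_mono algebra_simps)
  qed
  also have "\<dots> = exp (-c*(t+s)) * (\<integral>x. indicator {t<..} x * phi x \<partial>lborel)" by simp
  finally have "section_term M c \<ge> (1 - exp (-c*(t+s))) * (\<integral>x. indicator {t<..} x * phi x \<partial>lborel)"
    using L by (simp add: algebra_simps mult.commute)
  moreover have "0 \<le> 1 - exp (-c*(t+s))" using c ts by simp
  ultimately show ?thesis
    using tail_lower[OF t] mult_left_mono order_trans by blast
qed




lemma p_bounds: "(3989/10000) \<le> 1 / sqrt (2*pi)" "1 / sqrt (2*pi) \<le> ((399/1000)::real)"
proof -
  have pi1: "(3141592653588/1000000000000) \<le> pi" "pi \<le> (31415926535899/10000000000000)" using pi_approx by simp_all
  have "((25063/10000)::real) \<le> sqrt (2*pi)" using pi1 by (intro real_le_rsqrt) (simp add: power2_eq_square)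
  hence a: "1 / sqrt (2*pi) \<le> 1 / ((25063/10000)::real)" by (intro divide_left_mono) auto
  have "sqrt (2*pi) \<le> sqrt (((25067/10000)::real)\<^sup>2)" using pi1 by (intro real_sqrt_le_mono) (simp add: power2_eq_square)
  hence b: "sqrt (2*pi) \<le> (25067/10000)" by simp
  have "1 / ((25067/10000)::real) \<le> 1 / sqrt (2*pi)" using b by (intro divide_left_mono) auto
  thus "(3989/10000) \<le> 1 / sqrt (2*pi)" by simp
  show "1 / sqrt (2*pi) \<le> ((399/1000)::real)" using a by simp
qed

lemma sq_le: "0 \<le> a \<Longrightarrow> a \<le> b \<Longrightarrow> a\<^sup>2 \<le> (b::real)\<^sup>2"
  by (rule power_mono)

lemma sqrt_bound: "y\<^sup>2 \<le> a \<Longrightarrow> a \<le> b\<^sup>2 \<Longrightarrow> 0 \<le> b \<Longrightarrow> y \<le> (b::real)"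
  by (rule power2_le_imp_le) auto

lemma expm_le: "b \<le> exp a \<Longrightarrow> 0 < b \<Longrightarrow> exp (-a) \<le> 1 / (b::real)"
proof -
  assume "b \<le> exp a" "0 < b"
  moreover have "exp (-a) = 1 / exp a" by (simp add: exp_minus divide_inverse)
  ultimately show ?thesis by (simp add: frac_le)
qed

lemma phi_eq: "phi x = (1 / sqrt (2*pi)) * exp (- x\<^sup>2 / 2)" by (rule std_normal_density_def)

lemma NUM:
  fixes s y Q :: real
  assumes s: "s > 0" and y: "y > 0" and ys: "y\<^sup>2 \<le> 10 * s\<^sup>2"
    and Q0: "Q \<ge> 0" and Qh: "Q \<le> 1/2"
    and Ql: "\<And>r. 0 < r \<Longrightarrow> r \<le> s \<Longrightarrow> Q \<le> 1/2 - r * phi r"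
    and Qm: "Q \<le> phi s / s"
  shows "y * Q + phi s / 2 \<le> exp (- (y\<^sup>2) / 10000)"
proof -
  define p where "p = 1 / sqrt (2*pi)"
  have p: "(3989/10000) \<le> p" "p \<le> (399/1000)" unfolding p_def using p_bounds by auto
  have phieq: "phi x = p * exp (- x\<^sup>2 / 2)" for x unfolding p_def by (rule phi_eq)
  have R: "1 - y\<^sup>2 / 10000 \<le> exp (- (y\<^sup>2) / 10000)"
    using exp_ge_add_one_self[of "- (y\<^sup>2) / 10000"] by simp
  have phimono: "phi s \<le> phi r" if "0 \<le> r" "r \<le> s" for r
    using that s by (intro phi_mono) auto
  consider "s \<le> (45/100)" | "(45/100) < s" "s \<le> (7/10)" | "(7/10) < s" "s \<le> (9/10)" | "(9/10) < s" by linarith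
  thus ?thesis
  proof cases
    case 1
    have "s\<^sup>2 \<le> (45/100)\<^sup>2" using 1 s by (intro sq_le) auto
    hence "y\<^sup>2 \<le> (2025/1000)" using ys by (simp add: power2_eq_square)
    hence yb: "y \<le> (143/100)" by (rule sqrt_bound) (simp_all add: power2_eq_square)
    have "y * Q \<le> (143/100) * (1/2)" using yb Qh Q0 y by (intro mult_mono) auto
    moreover have "phi s \<le> (399/1000)"
    proof -
      have "exp (- s\<^sup>2 / 2) \<le> 1" by simp
      hence "p * exp (- s\<^sup>2 / 2) \<le> (399/1000) * 1" using p by (intro mult_mono) auto
      thus ?thesis by (simp add: phieq)
    qed
    ultimately show ?thesis using R \<open>y\<^sup>2 \<le> (2025/1000)\<close> by simp
  next
    case 2
    have e1: "exp (- ((45/100)::real)\<^sup>2 / 2) \<ge> (89875/100000)"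
      using exp_ge_add_one_self[of "- ((45/100)::real)\<^sup>2 / 2"] by (simp add: power2_eq_square)
    have E45: "exp (((45/100)::real)\<^sup>2 / 2) \<ge> (110125/100000)"
      using exp_ge_add_one_self[of "((45/100)::real)\<^sup>2 / 2"] by (simp add: power2_eq_square)
    have e2: "exp (- ((45/100)::real)\<^sup>2 / 2) \<le> 1 / (110125/100000)"
    proof -
      have "exp (- (((45/100)::real)\<^sup>2 / 2)) \<le> 1 / (110125/100000)" by (rule expm_le) (use E45 in auto)
      thus ?thesis by simp
    qed
    have "s\<^sup>2 \<le> (7/10)\<^sup>2" using 2 s by (intro sq_le) auto
    hence "y\<^sup>2 \<le> (49/10)" using ys by (simp add: power2_eq_square)
    hence yb: "y \<le> (2214/1000)" by (rule sqrt_bound) (simp_all add: power2_eq_square)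
    have "Q \<le> 1/2 - (45/100) * phi (45/100)" using Ql[of "45/100"] 2 by auto
    also have "phi (45/100) \<ge> (3989/10000) * (89875/100000)" unfolding phieq using p e1
      by (intro mult_mono) auto
    hence "1/2 - (45/100) * phi (45/100) \<le> 1/2 - (45/100) * ((3989/10000) * (89875/100000))" by linarith
    finally have Qb: "Q \<le> (33868/100000)" by simp
    have "y * Q \<le> (2214/1000) * (33868/100000)" using yb Qb Q0 y by (intro mult_mono) auto
    moreover have "phi s \<le> (399/1000) * (1 / (110125/100000))"
    proof -
      have "p * exp (- ((45/100)::real)\<^sup>2 / 2) \<le> (399/1000) * (1 / (110125/100000))" using p e2 by (intro mult_mono) auto
      thus ?thesis using phimono[of "45/100"] 2 unfolding phieq by linarith
    qed
    ultimately show ?thesis using R \<open>y\<^sup>2 \<le> (49/10)\<close> by simp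
  next
    case 3
    have "(1 + (- (245/1000)::real) / real (2::nat)) ^ 2 \<le> exp (- (245/1000))"
      by (rule exp_ge_one_plus_x_over_n_power_n) auto
    hence e1: "exp (- ((7/10)::real)\<^sup>2 / 2) \<ge> (77/100)"
      by (simp add: power2_eq_square)
    have "(1 + ((245/1000)::real) / real (2::nat)) ^ 2 \<le> exp (245/1000)"
      by (rule exp_ge_one_plus_x_over_n_power_n) auto
    hence E7: "exp (((7/10)::real)\<^sup>2 / 2) \<ge> (126/100)" by (simp add: power2_eq_square)
    have e2: "exp (- ((7/10)::real)\<^sup>2 / 2) \<le> 1 / (126/100)"
    proof -
      have "exp (- (((7/10)::real)\<^sup>2 / 2)) \<le> 1 / (126/100)" by (rule expm_le) (use E7 in auto)
      thus ?thesis by simp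
    qed
    have "s\<^sup>2 \<le> (9/10)\<^sup>2" using 3 s by (intro sq_le) auto
    hence "y\<^sup>2 \<le> (81/10)" using ys by (simp add: power2_eq_square)
    hence yb: "y \<le> (28461/10000)" by (rule sqrt_bound) (simp_all add: power2_eq_square)
    have "Q \<le> 1/2 - (7/10) * phi (7/10)" using Ql[of "7/10"] 3 by auto
    also have "phi (7/10) \<ge> (3989/10000) * (77/100)" unfolding phieq using p e1
      by (intro mult_mono) auto
    hence "1/2 - (7/10) * phi (7/10) \<le> 1/2 - (7/10) * ((3989/10000) * (77/100))" by linarith
    finally have Qb: "Q \<le> (28500/100000)" by simp
    have "y * Q \<le> (28461/10000) * (28500/100000)" using yb Qb Q0 y by (intro mult_mono) auto
    moreover have "phi s \<le> (399/1000) * (1 / (126/100))"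
    proof -
      have "p * exp (- ((7/10)::real)\<^sup>2 / 2) \<le> (399/1000) * (1 / (126/100))" using p e2 by (intro mult_mono) auto
      thus ?thesis using phimono[of "7/10"] 3 unfolding phieq by linarith
    qed
    ultimately show ?thesis using R \<open>y\<^sup>2 \<le> (81/10)\<close> by simp
  next
    case 4
    have ps: "phi s > 0" by (rule phi_pos)
    have "y \<le> (31623/10000) * s"
    proof -
      have ss: "0 \<le> s * s" by simp
      have "y\<^sup>2 \<le> ((31623/10000) * s)\<^sup>2" using ys by (simp add: power2_eq_square) (use ss in linarith)
      moreover have "0 \<le> (31623/10000) * s" using s by simp
      ultimately show ?thesis by (rule power2_le_imp_le)
    qed
    hence "y * Q \<le> ((31623/10000) * s) * (phi s / s)"
      using Qm Q0 y s by (intro mult_mono) simp_all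
    hence yQ: "y * Q \<le> (31623/10000) * phi s" using s by simp
    have "y * Q + phi s / 2 \<le> (36623/10000) * phi s" using yQ by simp
    also have "\<dots> \<le> (36623/10000) * (399/1000) * exp (- s\<^sup>2 / 2)"
      unfolding phieq using p by (simp add: mult_right_mono)
    also have "\<dots> \<le> exp (- s\<^sup>2 / 2) * exp ((499/1000) * s\<^sup>2)"
    proof -
      have "(1 + ((4/10)::real) / real (8::nat)) ^ 8 \<le> exp (4/10)" by (rule exp_ge_one_plus_x_over_n_power_n) auto
      hence "exp (4/10) \<ge> ((14774/10000)::real)" by (simp add: power_divide)
      moreover have "(9/10)\<^sup>2 \<le> s\<^sup>2" using 4 by (intro sq_le) auto
      hence "(4/10) \<le> (499/1000) * s\<^sup>2" by (simp add: power2_eq_square)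
      ultimately have "exp ((499/1000) * s\<^sup>2) \<ge> (14774/10000)"
        using exp_le_cancel_iff[of "(4/10)::real" "(499/1000) * s\<^sup>2"] by linarith
      hence "exp (- s\<^sup>2 / 2) * (14774/10000) \<le> exp (- s\<^sup>2 / 2) * exp ((499/1000) * s\<^sup>2)"
        by (intro mult_left_mono) auto
      moreover have "(36623/10000) * (399/1000) * exp (- s\<^sup>2 / 2) \<le> exp (- s\<^sup>2 / 2) * (14774/10000)" by simp
      ultimately show ?thesis by linarith
    qed
    also have "\<dots> = exp (- s\<^sup>2 / 1000)" by (simp add: mult_exp_exp)
    also have "\<dots> \<le> exp (- (y\<^sup>2) / 10000)" using ys by simp
    finally show ?thesis .
  qed
qed




lemma secA:
  fixes M :: nat and c \<delta> :: real
  assumes M2: "M \<ge> 2" and lnM1: "ln (real M - 1) \<ge> ln (real M) / 2" and Lpos: "ln (real M) > 0"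
    and d0: "0 < \<delta>" and d1: "\<delta> < 1/2" and c: "c > 0" and cb: "c\<^sup>2 > (2 + \<delta>) * ln (real M)"
  shows "section_term M c \<ge> 1 - exp (- (\<delta>\<^sup>2 * ln (real M)) / 10000) / (\<delta> * sqrt (ln (real M)))"
proof -
  define Lm where "Lm = ln (real M)"
  define l1 where "l1 = ln (real M - 1)"
  define s where "s = (c\<^sup>2/2 - l1) / c"
  define A where "A = c * s"
  have Lm: "Lm > 0" using Lpos by (simp add: Lm_def)
  have l1a: "l1 \<ge> Lm / 2" using lnM1 by (simp add: l1_def Lm_def)
  have l1b: "l1 \<le> Lm" unfolding l1_def Lm_def using M2 by simp
  have Aeq: "A = c\<^sup>2/2 - l1" unfolding A_def s_def using c by simp
  have K: "exp (-c * s) = (real M - 1) * exp (-(c\<^sup>2)/2)"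
  proof -
    have e: "-c * s = - (c\<^sup>2)/2 + l1" using Aeq unfolding A_def by simp
    have "exp (-c * s) = exp (-(c\<^sup>2)/2) * exp l1" unfolding e by (rule exp_add)
    also have "exp l1 = real M - 1" unfolding l1_def using M2 by simp
    finally show ?thesis by simp
  qed
  define t where "t = c\<^sup>2 - 2 * Lm"
  have t: "t > \<delta> * Lm" using cb unfolding t_def Lm_def by (simp add: algebra_simps)
  have dL: "\<delta> * Lm > 0" using d0 Lm by simp
  have At: "A \<ge> t / 2" using Aeq l1b unfolding t_def by simp
  have A0: "A > 0" using At t dL by simp
  have cs: "c > s"
  proof -
    have "c * (c - s) = c\<^sup>2/2 + l1" using Aeq unfolding A_def by (simp add: algebra_simps power2_eq_square)
    also have "\<dots> > 0" using l1a Lm zero_le_power2[of c] by linarith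
    finally show ?thesis using c by (simp add: zero_less_mult_iff)
  qed
  have s0: "s > 0" using A0 c unfolding A_def by (simp add: zero_less_mult_iff)
  define y where "y = \<delta> * sqrt Lm"
  have y0: "y > 0" unfolding y_def using d0 Lm by simp
  have y2: "y\<^sup>2 = \<delta>\<^sup>2 * Lm" unfolding y_def using Lm by (simp add: power_mult_distrib)
  have ys: "y\<^sup>2 \<le> 10 * s\<^sup>2"
  proof -
    have "10 * A\<^sup>2 \<ge> 10 * (t/2)\<^sup>2" using At t dL by (intro mult_left_mono sq_le) auto
    moreover have "10 * (t/2)\<^sup>2 \<ge> \<delta>\<^sup>2 * Lm * c\<^sup>2"
    proof -
      have c2: "c\<^sup>2 = t + 2 * Lm" unfolding t_def by simp
      have "(\<delta> * Lm)\<^sup>2 \<le> t\<^sup>2" using t dL by (intro sq_le) auto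
      hence h1: "2 * (\<delta>\<^sup>2 * Lm * Lm) \<le> 2 * t\<^sup>2" by (simp add: power_mult_distrib power2_eq_square ac_simps)
      have "\<delta> * (\<delta> * Lm) * t \<le> \<delta> * t * t" using t d0 dL by (intro mult_mono mult_left_mono) auto
      also have "\<dots> \<le> (1/2) * t * t" using d1 t dL by (intro mult_right_mono) auto
      finally have h2: "\<delta>\<^sup>2 * Lm * t \<le> (1/2) * t\<^sup>2" by (simp add: power2_eq_square algebra_simps)
      have "\<delta>\<^sup>2 * Lm * c\<^sup>2 = 2 * (\<delta>\<^sup>2 * Lm * Lm) + \<delta>\<^sup>2 * Lm * t" unfolding c2 by (simp add: algebra_simps)
      also have "\<dots> \<le> 10 * (t/2)\<^sup>2" using h1 h2 by (simp add: power2_eq_square)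
      finally show ?thesis .
    qed
    ultimately have "\<delta>\<^sup>2 * Lm * c\<^sup>2 \<le> 10 * s\<^sup>2 * c\<^sup>2" unfolding A_def by (simp add: power_mult_distrib ac_simps)
    hence "\<delta>\<^sup>2 * Lm \<le> 10 * s\<^sup>2" using c by simp
    thus ?thesis using y2 by simp
  qed
  have csL: "c - s \<ge> sqrt Lm"
  proof -
    have "c * (c - s) = c\<^sup>2/2 + l1" using Aeq unfolding A_def by (simp add: algebra_simps power2_eq_square)
    also have "\<dots> \<ge> c\<^sup>2/2 + Lm/2" using l1a by simp
    also have "c\<^sup>2/2 + Lm/2 \<ge> c * sqrt Lm"
    proof -
      have "0 \<le> (c - sqrt Lm)\<^sup>2" by simp
      thus ?thesis using Lm by (simp add: power2_eq_square algebra_simps)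
    qed
    finally have "c * sqrt Lm \<le> c * (c - s)" .
    thus ?thesis using c by simp
  qed
  define Q where "Q = (\<integral>x. indicator {s..} x * phi x \<partial>lborel)"
  have core: "section_term M c \<ge> 1 - Q - phi s / (c - s)"
    unfolding Q_def by (rule secA_core[OF M2 cs K])
  have Q0: "Q \<ge> 0" unfolding Q_def by (intro integral_nonneg_AE) (auto simp: indicator_def less_imp_le[OF phi_pos])
  have num: "y * Q + phi s / 2 \<le> exp (- (y\<^sup>2) / 10000)"
  proof (rule NUM[OF s0 y0 ys Q0])
    show "Q \<le> 1/2" unfolding Q_def by (rule tail_half[OF s0])
    show "Q \<le> phi s / s" unfolding Q_def by (rule mills[OF s0])
    fix r :: real assume "0 < r" "r \<le> s"
    thus "Q \<le> 1/2 - r * phi r" unfolding Q_def by (rule tail_lin)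
  qed
  have "y * (phi s / (c - s)) \<le> phi s / 2"
  proof -
    have "y / (c - s) \<le> \<delta>"
    proof -
      have "y \<le> \<delta> * (c - s)" unfolding y_def using csL d0 by (intro mult_left_mono) auto
      thus ?thesis using cs by (simp add: divide_le_eq mult.commute)
    qed
    hence "y / (c - s) \<le> 1/2" using d1 by linarith
    hence "phi s * (y / (c - s)) \<le> phi s * (1/2)" using phi_pos[of s] by (intro mult_left_mono) auto
    thus ?thesis by (simp add: algebra_simps)
  qed
  moreover have "y * (Q + phi s / (c - s)) = y * Q + y * (phi s / (c - s))" by (simp add: distrib_left)
  ultimately have "y * (Q + phi s / (c - s)) \<le> exp (- (y\<^sup>2) / 10000)" using num by linarith
  hence "Q + phi s / (c - s) \<le> exp (- (y\<^sup>2) / 10000) / y" using y0 by (simp add: le_divide_eq mult.commute)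
  hence "section_term M c \<ge> 1 - exp (- (y\<^sup>2) / 10000) / y" using core by linarith
  thus ?thesis unfolding y2 unfolding y_def Lm_def .
qed




lemma secB:
  fixes M :: nat and c :: real
  assumes M2: "M \<ge> 2" and L400: "ln (real M) \<ge> 400" and c: "c > 0"
    and cb: "c\<^sup>2 \<ge> 2 * (1 - (1/10) / sqrt (ln (real M))) * ln (real M)"
  shows "section_term M c \<ge> 1/4"
proof -
  define Lm where "Lm = ln (real M)"
  define l1 where "l1 = ln (real M - 1)"
  define s where "s = (c\<^sup>2/2 - l1) / c"
  define r where "r = sqrt Lm"
  have Lm: "Lm \<ge> 400" using L400 by (simp add: Lm_def)
  have r20: "r \<ge> 20" unfolding r_def using Lm by (intro real_le_rsqrt) simp
  have rr: "r * r = Lm" unfolding r_def using Lm by simp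
  have l1b: "l1 \<le> Lm" unfolding l1_def Lm_def using M2 by simp
  have cs_eq: "c * s = c\<^sup>2/2 - l1" unfolding s_def using c by simp
  have K: "exp (-c * s) = (real M - 1) * exp (-(c\<^sup>2)/2)"
  proof -
    have e: "-c * s = - (c\<^sup>2)/2 + l1" using cs_eq by simp
    have "exp (-c * s) = exp (-(c\<^sup>2)/2) * exp l1" unfolding e by (rule exp_add)
    also have "exp l1 = real M - 1" unfolding l1_def using M2 by simp
    finally show ?thesis by simp
  qed
  have cb': "c\<^sup>2 \<ge> 2 * Lm - r / 5"
  proof -
    have "2 * (1 - (1/10) / r) * Lm = 2 * Lm - r / 5" using rr r20 by (simp add: field_simps)
    thus ?thesis using cb unfolding Lm_def r_def by simp
  qed
  have cr: "c \<ge> r"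
  proof -
    have "20 * r \<le> r * r" using r20 by (intro mult_right_mono) auto
    hence "r\<^sup>2 \<le> c\<^sup>2" using cb' rr r20 by (simp add: power2_eq_square)
    thus ?thesis using power2_le_imp_le[of r c] c by linarith
  qed
  have csb: "c * s \<ge> - r / 10" using cs_eq cb' l1b by simp
  have ct: "c * (1/5 + s) \<ge> 2"
  proof -
    have "c * (1/5 + s) = c / 5 + c * s" by (simp add: algebra_simps)
    thus ?thesis using cr csb r20 by simp
  qed
  have ts: "1/5 + s \<ge> 0"
  proof (rule ccontr)
    assume "\<not> 1/5 + s \<ge> 0"
    hence "c * (1/5 + s) < 0" using c by (intro mult_pos_neg) auto
    thus False using ct by linarith
  qed
  have core: "section_term M c \<ge> (1 - exp (-c*(1/5+s))) * (1/2 - (1/5) / sqrt (2*pi))"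
    by (rule secB_core[OF M2 less_imp_le[OF c] _ ts K]) simp
  have e2: "exp (-c*(1/5+s)) \<le> 1/3"
  proof -
    have "exp (-c*(1/5+s)) \<le> exp (-2)" using ct by simp
    also have "exp (-2) \<le> 1 / (3::real)"
      using expm_le[of 3 2] exp_ge_add_one_self[of 2] by simp
    finally show ?thesis .
  qed
  have p: "(1/5) / sqrt (2*pi) \<le> (1/5) * (399/1000)" using p_bounds(2) by simp
  have "(1 - 1/3) * (1/2 - (1/5) * (399/1000)) \<le> (1 - exp (-c*(1/5+s))) * (1/2 - (1/5) / sqrt (2*pi))"
    using e2 p ct by (intro mult_mono) auto
  thus ?thesis using core by simp
qed




lemma section_nonneg: "section_term M c \<ge> 0"
  unfolding section_term_def
proof (intro integral_nonneg_AE AE_I2)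
  fix u :: "nat \<Rightarrow> real"
  have "0 \<le> (\<Sum>j\<in>{2..M}. exp (c * u j))" by (intro sum_nonneg) auto
  thus "0 \<le> exp (c * (u 1 + c)) / (exp (c * (u 1 + c)) + (\<Sum>j\<in>{2..M}. exp (c * u j)))"
    by (intro divide_nonneg_pos add_pos_nonneg) auto
qed

lemma lnM_facts:
  fixes M :: nat
  assumes M: "real M \<ge> exp 400" "M \<ge> 3"
  shows "ln (real M) \<ge> 400" "ln (real M - 1) \<ge> ln (real M) / 2" "ln (real M) > 0"
proof -
  show L: "ln (real M) \<ge> 400" using M(1) by (metis exp_gt_zero ln_exp ln_le_cancel_iff order_less_le_trans)
  thus "ln (real M) > 0" by simp
  have M3: "real M \<ge> 3" using M(2) by simp
  have "0 \<le> real M * (real M - 3)" using M3 by simp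
  hence "real M \<le> (real M - 1)\<^sup>2" by (simp add: power2_eq_square algebra_simps)
  hence "ln (real M) \<le> ln ((real M - 1)\<^sup>2)" using M3 by (intro ln_mono) auto
  also have "\<dots> = 2 * ln (real M - 1)" using M3 by (simp add: ln_realpow)
  finally show "ln (real M - 1) \<ge> ln (real M) / 2" by simp
qed

lemma per_l:
  fixes M n L :: nat and Pl R \<tau> \<delta> :: real
  assumes M: "real M \<ge> exp 400" "M \<ge> 3" and Pl: "Pl > 0" and R: "R > 0" and tau: "\<tau> > 0"
    and n1: "n \<ge> 1"
    and LMn: "real L * ln (real M) = real n * R" and d: "0 < \<delta>" "\<delta> < 1/2"
  shows "section_term M (sqrt (real n * Pl) / \<tau>) \<ge>
     (1 - real M powr (- (1/10000) * \<delta>\<^sup>2) / (\<delta> * sqrt (ln (real M)))) * (if real L * Pl / (R * \<tau>\<^sup>2) > 2 + \<delta> then 1 else 0)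
     + 1/4 * (if 2 * (1 - (1/10) / sqrt (ln (real M))) \<le> real L * Pl / (R * \<tau>\<^sup>2) \<and> real L * Pl / (R * \<tau>\<^sup>2) \<le> 2 + \<delta> then 1 else 0)"
proof -
  define \<nu> where "\<nu> = real L * Pl / (R * \<tau>\<^sup>2)"
  define c where "c = sqrt (real n * Pl) / \<tau>"
  define Lm where "Lm = ln (real M)"
  note LF = lnM_facts[OF M]
  have M2: "M \<ge> 2" using M by simp
  have Lm: "Lm \<ge> 400" "Lm > 0" using LF unfolding Lm_def by auto
  have n0: "real n > 0" using n1 by simp
  have c0: "c > 0" unfolding c_def using n0 Pl tau by simp
  have c2: "c\<^sup>2 = \<nu> * Lm"
  proof -
    have "c\<^sup>2 = real n * Pl / \<tau>\<^sup>2" unfolding c_def using n0 Pl by (simp add: power_divide)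
    also have "\<dots> = (real n * R) * Pl / (R * \<tau>\<^sup>2)" using R by simp
    also have "\<dots> = (real L * Lm) * Pl / (R * \<tau>\<^sup>2)" using LMn unfolding Lm_def by simp
    also have "\<dots> = \<nu> * Lm" unfolding \<nu>_def by (simp add: algebra_simps)
    finally show ?thesis .
  qed
  have pw: "real M powr (- (1/10000) * \<delta>\<^sup>2) = exp (- (\<delta>\<^sup>2 * Lm) / 10000)"
    unfolding powr_def Lm_def using M by (simp add: algebra_simps)
  have T0: "section_term M c \<ge> 0" by (rule section_nonneg)
  consider "\<nu> > 2 + \<delta>" | "\<not> \<nu> > 2 + \<delta>" "2 * (1 - (1/10) / sqrt Lm) \<le> \<nu>" | "\<not> \<nu> > 2 + \<delta>" "\<not> 2 * (1 - (1/10) / sqrt Lm) \<le> \<nu>"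
    by blast
  thus ?thesis
  proof cases
    case 1
    have cb: "c\<^sup>2 > (2 + \<delta>) * ln (real M)" using 1 Lm c2 unfolding Lm_def by simp
    have "section_term M c \<ge> 1 - exp (- (\<delta>\<^sup>2 * ln (real M)) / 10000) / (\<delta> * sqrt (ln (real M)))"
      by (rule secA[OF M2 LF(2) LF(3) d c0 cb])
    thus ?thesis using 1 unfolding c_def[symmetric] \<nu>_def[symmetric] pw Lm_def by simp
  next
    case 2
    have cb: "c\<^sup>2 \<ge> 2 * (1 - (1/10) / sqrt (ln (real M))) * ln (real M)"
      using 2(2) Lm c2 unfolding Lm_def by (simp add: mult_right_mono)
    have "section_term M c \<ge> 1/4" by (rule secB[OF M2 LF(1) c0 cb])
    thus ?thesis using 2 unfolding c_def[symmetric] \<nu>_def[symmetric] Lm_def by simp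
  next
    case 3
    thus ?thesis using T0 unfolding c_def[symmetric] \<nu>_def[symmetric] Lm_def by simp
  qed
qed




lemma Pl_pos:
  assumes s: "sigma2 > 0" and P: "P > 0" and L: "L \<ge> 1"
  shows "exp_power_alloc P (capacity P sigma2) L l > 0"
proof -
  define C where "C = capacity P sigma2"
  have "1 < 1 + P / sigma2" using s P by simp
  hence C: "C > 0" unfolding C_def capacity_def using ln_gt_zero by simp
  have "exp (2 * C / real L) > 1" using C L by simp
  moreover have "1 - exp (- 2 * C) > 0" using C by simp
  ultimately show ?thesis unfolding exp_power_alloc_def C_def[symmetric] using P by simp
qed

theorem mainTheorem6:
  shows "\<exists>\<kappa>1>0. \<exists>\<kappa>2>0. \<forall>(sigma2::real) (P::real) (R::real) (\<tau>::real).
    sigma2 > 0 \<and> P > 0 \<and> R > 0 \<and> \<tau> > 0 \<longrightarrow>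
    (\<exists>M0::nat. \<forall>(M::nat) (L::nat) (n::nat).
       M \<ge> M0 \<and> L \<ge> 1 \<and> n \<ge> 1 \<and> real L * ln (real M) = real n * R \<longrightarrow>
       (let C = capacity P sigma2;
            Pl = exp_power_alloc P C L;
            \<nu> = (\<lambda>l. real L * Pl l / (R * \<tau>\<^sup>2))
        in \<forall>\<delta>::real. 0 < \<delta> \<and> \<delta> < 1/2 \<longrightarrow>
           x_tau n M L Pl P \<tau> \<ge>
             (1 - real M powr (- \<kappa>1 * \<delta>\<^sup>2) / (\<delta> * sqrt (ln (real M))))
               * (\<Sum>l=1..L. Pl l / P * (if \<nu> l > 2 + \<delta> then 1 else 0))
             + 1/4 * (\<Sum>l=1..L. Pl l / P *
                 (if 2 * (1 - \<kappa>2 / sqrt (ln (real M))) \<le> \<nu> l \<and> \<nu> l \<le> 2 + \<delta>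
                  then 1 else 0))))"
proof (rule exI[of _ "1/10000::real"], rule conjI, simp, rule exI[of _ "1/10::real"], rule conjI, simp, intro allI impI)
  fix sigma2 P R \<tau> :: real
  assume H: "sigma2 > 0 \<and> P > 0 \<and> R > 0 \<and> \<tau> > 0"
  hence s: "sigma2 > 0" and P: "P > 0" and R: "R > 0" and tau: "\<tau> > 0" by auto
  show "\<exists>M0::nat. \<forall>(M::nat) (L::nat) (n::nat).
       M \<ge> M0 \<and> L \<ge> 1 \<and> n \<ge> 1 \<and> real L * ln (real M) = real n * R \<longrightarrow>
       (let C = capacity P sigma2;
            Pl = exp_power_alloc P C L;
            \<nu> = (\<lambda>l. real L * Pl l / (R * \<tau>\<^sup>2))
        in \<forall>\<delta>::real. 0 < \<delta> \<and> \<delta> < 1/2 \<longrightarrow>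
           x_tau n M L Pl P \<tau> \<ge>
             (1 - real M powr (- (1/10000) * \<delta>\<^sup>2) / (\<delta> * sqrt (ln (real M))))
               * (\<Sum>l=1..L. Pl l / P * (if \<nu> l > 2 + \<delta> then 1 else 0))
             + 1/4 * (\<Sum>l=1..L. Pl l / P *
                 (if 2 * (1 - (1/10) / sqrt (ln (real M))) \<le> \<nu> l \<and> \<nu> l \<le> 2 + \<delta>
                  then 1 else 0)))"
  proof (intro exI[of _ "nat \<lceil>exp (400::real)\<rceil> + 3"] allI impI)
    fix M L n :: nat
    assume A: "nat \<lceil>exp (400::real)\<rceil> + 3 \<le> M \<and> 1 \<le> L \<and> 1 \<le> n \<and> real L * ln (real M) = real n * R"
    have M: "real M \<ge> exp 400" "M \<ge> 3"
    proof -
      have "exp 400 \<le> real (nat \<lceil>exp (400::real)\<rceil>)" by (rule real_nat_ceiling_ge)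
      also have "\<dots> \<le> real M"
      proof -
        have "nat \<lceil>exp (400::real)\<rceil> \<le> M" using A by linarith
        thus ?thesis by (rule of_nat_mono)
      qed
      finally show "real M \<ge> exp 400" .
      show "M \<ge> 3" using A by simp
    qed
    have L: "L \<ge> 1" and n1: "n \<ge> 1" and LMn: "real L * ln (real M) = real n * R" using A by auto
    define Pl where "Pl = exp_power_alloc P (capacity P sigma2) L"
    have Plp: "Pl l > 0" for l unfolding Pl_def by (rule Pl_pos[OF s P L])
    show "let C = capacity P sigma2;
            Pl = exp_power_alloc P C L;
            \<nu> = (\<lambda>l. real L * Pl l / (R * \<tau>\<^sup>2))
        in \<forall>\<delta>::real. 0 < \<delta> \<and> \<delta> < 1/2 \<longrightarrow>
           x_tau n M L Pl P \<tau> \<ge>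
             (1 - real M powr (- (1/10000) * \<delta>\<^sup>2) / (\<delta> * sqrt (ln (real M))))
               * (\<Sum>l=1..L. Pl l / P * (if \<nu> l > 2 + \<delta> then 1 else 0))
             + 1/4 * (\<Sum>l=1..L. Pl l / P *
                 (if 2 * (1 - (1/10) / sqrt (ln (real M))) \<le> \<nu> l \<and> \<nu> l \<le> 2 + \<delta>
                  then 1 else 0))"
      unfolding Let_def Pl_def[symmetric]
    proof (intro allI impI)
      fix \<delta> :: real assume d: "0 < \<delta> \<and> \<delta> < 1/2"
      define coef where "coef = 1 - real M powr (- (1/10000) * \<delta>\<^sup>2) / (\<delta> * sqrt (ln (real M)))"
      define i1 where "i1 l = (if real L * Pl l / (R * \<tau>\<^sup>2) > 2 + \<delta> then 1 else 0 :: real)" for l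
      define i2 where "i2 l = (if 2 * (1 - (1/10) / sqrt (ln (real M))) \<le> real L * Pl l / (R * \<tau>\<^sup>2)
           \<and> real L * Pl l / (R * \<tau>\<^sup>2) \<le> 2 + \<delta> then 1 else 0 :: real)" for l
      have "coef * (\<Sum>l=1..L. Pl l / P * i1 l) + 1/4 * (\<Sum>l=1..L. Pl l / P * i2 l)
          = (\<Sum>l=1..L. Pl l / P * (coef * i1 l + 1/4 * i2 l))"
        by (simp add: sum_distrib_left sum.distrib algebra_simps)
      also have "\<dots> \<le> (\<Sum>l=1..L. Pl l / P * section_term M (sqrt (real n * Pl l) / \<tau>))"
      proof (rule sum_mono)
        fix l assume "l \<in> {1..L}"
        have "coef * i1 l + 1/4 * i2 l \<le> section_term M (sqrt (real n * Pl l) / \<tau>)"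
          unfolding coef_def i1_def i2_def
          using per_l[OF M Plp[of l] R tau n1 LMn] d by blast
        thus "Pl l / P * (coef * i1 l + 1/4 * i2 l) \<le> Pl l / P * section_term M (sqrt (real n * Pl l) / \<tau>)"
          using Plp[of l] P by (intro mult_left_mono) auto
      qed
      also have "\<dots> = x_tau n M L Pl P \<tau>" unfolding x_tau_def ..
      finally have F: "x_tau n M L Pl P \<tau> \<ge> coef * (\<Sum>l=1..L. Pl l / P * i1 l) + 1/4 * (\<Sum>l=1..L. Pl l / P * i2 l)" .
      show "x_tau n M L Pl P \<tau> \<ge>
             (1 - real M powr (- (1/10000) * \<delta>\<^sup>2) / (\<delta> * sqrt (ln (real M))))
               * (\<Sum>l=1..L. Pl l / P * (if real L * Pl l / (R * \<tau>\<^sup>2) > 2 + \<delta> then 1 else 0))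
             + 1/4 * (\<Sum>l=1..L. Pl l / P *
                 (if 2 * (1 - (1/10) / sqrt (ln (real M))) \<le> real L * Pl l / (R * \<tau>\<^sup>2) \<and> real L * Pl l / (R * \<tau>\<^sup>2) \<le> 2 + \<delta>
                  then 1 else 0))"
        using F unfolding coef_def i1_def i2_def .
    qed
  qed
qed


end
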